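(* Consider the simplified model in the context (common Rician factor $\kappa$, intercell factor $\alpha$, orthogonal LoS components with $\frac1N\bar{\mathbf H}_{jj}^H\bar{\mathbf H}_{jj}=\frac{\kappa}{1+\kappa}\mathbf I_K$ for all $j$) under the asymptotic regime of the context. Then the deterministic approximations $\bar\gamma^{\rm MRC}_{jk}$ and $\bar\gamma^{\rm MRT}_{jk}$ both reduce to $$\frac{1}{\frac{1}{\nu N\rho}\frac{1+\kappa}{\tau}+\frac{K}{N\nu}\Big(\bar L\frac{1+\kappa}{\tau}+\frac1{\tau^2}\frac{\kappa}{1+\kappa}\Big)+\frac{\alpha}{\tau^2}\Big(\bar L-\frac1{1+\kappa}\Big)}=\frac{1}{\frac{\bar L}{N\rho}\frac{1+\kappa}{\tau}+\frac1{\rho^{\rm tr}}A+\frac KN\bar LB+\frac{\alpha}{\tau^2}\Big(\bar L-\frac1{1+\kappa}\Big)},$$ where $\rho=\rho^{\rm dl}$ for MRT and $\rho=\rho^{\rm ul}$ for MRC, $\nu=\frac{\rho^{\rm tr}}{1+\rho^{\rm tr}\bar L}$, $\bar L=\alpha(L-1)+\frac1{1+\kappa}$, $\tau=\frac1{1+\kappa}+\frac{\kappa}{\nu}$, $A=\big(\frac KN\bar L+\frac1{N\rho}\big)\frac{1+\kappa}{\tau}+\frac KN\frac1{\tau^2}\frac{\kappa}{1+\kappa}$ and $B=\bar L\frac{1+\kappa}{\tau}+\frac1{\tau^2}\frac{\kappa}{1+\kappa}$.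
   Context: Simplified model: $L$ cells, each BS with $N$ antennas and $K$ single-antenna UEs; channel from UE $k$ in cell $l$ to BS $j$: $\mathbf h_{jjk}=\sqrt{\frac1{1+\kappa}}\mathbf z_{jjk}+\sqrt{\frac{\kappa}{1+\kappa}}\mathbf a_{jjk}$, $\mathbf h_{jlk}=\sqrt\alpha\,\mathbf z_{jlk}$ ($l\ne j$), with independent $\mathbf z_{jlk}\sim\mathcal{CN}(\mathbf 0,\mathbf I_N)$, intercell factor $\alpha\in(0,1]$, Rician factor $\kappa\ge0$, deterministic $\mathbf a_{jjk}\in\mathbb C^N$. Thus $d_{jjk}=\frac1{1+\kappa}$, $d_{jlk}=\alpha$ ($l\ne j$), LoS vectors $\bar{\mathbf h}_{jjk}=\sqrt{\frac{\kappa}{1+\kappa}}\mathbf a_{jjk}$, $\bar{\mathbf H}_{jj}=[\bar{\mathbf h}_{jj1},\dots,\bar{\mathbf h}_{jjK}]$. With training SNR $\rho^{\rm tr}>0$, $\phi_{jlk}=\frac{d_{jjk}d_{jlk}}{1/\rho^{\rm tr}+\sum_nd_{jnk}}$ (so $\phi_{jjk}=\frac{\nu}{(1+\kappa)^2}$, $\phi_{jlk}=\frac{\alpha\nu}{1+\kappa}$ for $l\ne j$). Let $\bar\theta_l=(\frac1K\sum_k(\phi_{llk}+\frac1N\bar{\mathbf h}_{llk}^H\bar{\mathbf h}_{llk}))^{-1}$. Deterministic approximations: $\bar\gamma^{\rm MRT}_{jk}=\frac{\bar\theta_j(\phi_{jjk}+\frac1N\bar{\mathbf h}_{jjk}^H\bar{\mathbf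 h}_{jjk})^2}{\frac1{N\rho^{\rm dl}}+s^{\rm MRT}_{jk}+\bar\theta_j\sum_{i\ne k}|\frac1N\bar{\mathbf h}_{jji}^H\bar{\mathbf h}_{jjk}|^2+\sum_{l\ne j}\bar\theta_l\phi_{ljk}^2}$, $s^{\rm MRT}_{jk}=\frac1N\sum_l\sum_i\bar\theta_ld_{ljk}(\phi_{lli}+\frac1N\bar{\mathbf h}_{lli}^H\bar{\mathbf h}_{lli})+\frac1N\sum_{i\ne k}\bar\theta_j\phi_{jji}\frac1N\bar{\mathbf h}_{jjk}^H\bar{\mathbf h}_{jjk}$; $\bar\gamma^{\rm MRC}_{jk}=\frac{(\phi_{jjk}+\frac1N\bar{\mathbf h}_{jjk}^H\bar{\mathbf h}_{jjk})^2}{\frac1{N\rho^{\rm ul}\bar\theta_j}+s^{\rm MRC}_{jk}+\sum_{i\ne k}|\frac1N\bar{\mathbf h}_{jjk}^H\bar{\mathbf h}_{jji}|^2+\sum_{l\ne j}\phi_{jlk}^2}$, $s^{\rm MRC}_{jk}=\frac1N\sum_l\sum_id_{jli}(\phi_{jjk}+\frac1N\bar{\mathbf h}_{jjk}^H\bar{\mathbf h}_{jjk})+\frac1N\sum_{i\ne k}\phi_{jjk}\frac1N\bar{\mathbf h}_{jji}^H\bar{\mathbf h}_{jji}$. Asymptotic regime: $N,K\to\infty$ with $1\le\liminf N/K\le\limsup N/K<\infty$; large-scale coefficients bounded away from $0$ and $\infty$; $\limsup_N\|\bar{\mathbf H}_{jj}\|<\infty$ (spectral norm). *)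

theory Defs
  imports "HOL-Analysis.Analysis" "HOL-Library.Liminf_Limsup"
begin

text \<open>Cells are indexed by 0..<L, UEs by 0..<K, antennas by 0..<N.
  d j l k = d_{jlk} (large-scale coefficient of the channel from UE k in cell l to BS j);
  hb j k :: nat \<Rightarrow> complex is the LoS vector \<bar>h_{jjk} (component m for m < N).\<close>

definition gram :: "nat \<Rightarrow> (nat \<Rightarrow> complex) \<Rightarrow> (nat \<Rightarrow> complex) \<Rightarrow> complex" where
  "gram N x y = (\<Sum>m<N. cnj (x m) * y m) / of_nat N"

definition phi :: "(nat \<Rightarrow> nat \<Rightarrow> nat \<Rightarrow> real) \<Rightarrow> nat \<Rightarrow> real \<Rightarrow> nat \<Rightarrow> nat \<Rightarrow> nat \<Rightarrow> real" where
  "phi d L rtr j l k = d j j k * d j l k / (1 / rtr + (\<Sum>n<L. d j n k))"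

definition nrm :: "nat \<Rightarrow> (nat \<Rightarrow> nat \<Rightarrow> nat \<Rightarrow> complex) \<Rightarrow> nat \<Rightarrow> nat \<Rightarrow> real" where
  "nrm N hb j k = Re (gram N (hb j k) (hb j k))"

definition theta_bar ::
  "(nat \<Rightarrow> nat \<Rightarrow> nat \<Rightarrow> real) \<Rightarrow> (nat \<Rightarrow> nat \<Rightarrow> nat \<Rightarrow> complex) \<Rightarrow> nat \<Rightarrow> nat \<Rightarrow> nat \<Rightarrow> real \<Rightarrow> nat \<Rightarrow> real" where
  "theta_bar d hb N K L rtr l =
     inverse ((1 / real K) * (\<Sum>k<K. phi d L rtr l l k + nrm N hb l k))"

definition s_MRT ::
  "(nat \<Rightarrow> nat \<Rightarrow> nat \<Rightarrow> real) \<Rightarrow> (nat \<Rightarrow> nat \<Rightarrow> nat \<Rightarrow> complex) \<Rightarrow> nat \<Rightarrow> nat \<Rightarrow> nat \<Rightarrow> real \<Rightarrow> nat \<Rightarrow> nat \<Rightarrow> real" where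
  "s_MRT d hb N K L rtr j k =
     (1 / real N) * (\<Sum>l<L. \<Sum>i<K. theta_bar d hb N K L rtr l * d l j k * (phi d L rtr l l i + nrm N hb l i))
     + (1 / real N) * (\<Sum>i\<in>{..<K} - {k}. theta_bar d hb N K L rtr j * phi d L rtr j j i * nrm N hb j k)"

definition gamma_MRT ::
  "(nat \<Rightarrow> nat \<Rightarrow> nat \<Rightarrow> real) \<Rightarrow> (nat \<Rightarrow> nat \<Rightarrow> nat \<Rightarrow> complex) \<Rightarrow> nat \<Rightarrow> nat \<Rightarrow> nat \<Rightarrow> real \<Rightarrow> real \<Rightarrow> nat \<Rightarrow> nat \<Rightarrow> real" where
  "gamma_MRT d hb N K L rtr rdl j k =
     theta_bar d hb N K L rtr j * (phi d L rtr j j k + nrm N hb j k)^2 /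
     (1 / (real N * rdl) + s_MRT d hb N K L rtr j k
      + theta_bar d hb N K L rtr j * (\<Sum>i\<in>{..<K} - {k}. (cmod (gram N (hb j i) (hb j k)))^2)
      + (\<Sum>l\<in>{..<L} - {j}. theta_bar d hb N K L rtr l * (phi d L rtr l j k)^2))"

definition s_MRC ::
  "(nat \<Rightarrow> nat \<Rightarrow> nat \<Rightarrow> real) \<Rightarrow> (nat \<Rightarrow> nat \<Rightarrow> nat \<Rightarrow> complex) \<Rightarrow> nat \<Rightarrow> nat \<Rightarrow> nat \<Rightarrow> real \<Rightarrow> nat \<Rightarrow> nat \<Rightarrow> real" where
  "s_MRC d hb N K L rtr j k =
     (1 / real N) * (\<Sum>l<L. \<Sum>i<K. d j l i * (phi d L rtr j j k + nrm N hb j k))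
     + (1 / real N) * (\<Sum>i\<in>{..<K} - {k}. phi d L rtr j j k * nrm N hb j i)"

definition gamma_MRC ::
  "(nat \<Rightarrow> nat \<Rightarrow> nat \<Rightarrow> real) \<Rightarrow> (nat \<Rightarrow> nat \<Rightarrow> nat \<Rightarrow> complex) \<Rightarrow> nat \<Rightarrow> nat \<Rightarrow> nat \<Rightarrow> real \<Rightarrow> real \<Rightarrow> nat \<Rightarrow> nat \<Rightarrow> real" where
  "gamma_MRC d hb N K L rtr rul j k =
     (phi d L rtr j j k + nrm N hb j k)^2 /
     (1 / (real N * rul * theta_bar d hb N K L rtr j) + s_MRC d hb N K L rtr j k
      + (\<Sum>i\<in>{..<K} - {k}. (cmod (gram N (hb j k) (hb j i)))^2)
      + (\<Sum>l\<in>{..<L} - {j}. (phi d L rtr j l k)^2))"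

definition d_simple :: "real \<Rightarrow> real \<Rightarrow> nat \<Rightarrow> nat \<Rightarrow> nat \<Rightarrow> real" where
  "d_simple kappa alpha j l k = (if l = j then 1 / (1 + kappa) else alpha)"

definition hb_simple :: "real \<Rightarrow> (nat \<Rightarrow> nat \<Rightarrow> nat \<Rightarrow> complex) \<Rightarrow> nat \<Rightarrow> nat \<Rightarrow> nat \<Rightarrow> complex" where
  "hb_simple kappa a j k m = complex_of_real (sqrt (kappa / (1 + kappa))) * a j k m"

definition Lbar :: "nat \<Rightarrow> real \<Rightarrow> real \<Rightarrow> real" where
  "Lbar L alpha kappa = alpha * (real L - 1) + 1 / (1 + kappa)"

definition nu :: "nat \<Rightarrow> real \<Rightarrow> real \<Rightarrow> real \<Rightarrow> real" where
  "nu L alpha kappa rtr = rtr / (1 + rtr * Lbar L alpha kappa)"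

definition tau :: "nat \<Rightarrow> real \<Rightarrow> real \<Rightarrow> real \<Rightarrow> real" where
  "tau L alpha kappa rtr = 1 / (1 + kappa) + kappa / nu L alpha kappa rtr"

definition A_coef :: "nat \<Rightarrow> nat \<Rightarrow> nat \<Rightarrow> real \<Rightarrow> real \<Rightarrow> real \<Rightarrow> real \<Rightarrow> real" where
  "A_coef N K L alpha kappa rtr rho =
     (let Lb = Lbar L alpha kappa; t = tau L alpha kappa rtr in
      (real K / real N * Lb + 1 / (real N * rho)) * ((1 + kappa) / t)
      + real K / real N * (1 / t^2) * (kappa / (1 + kappa)))"

definition B_coef :: "nat \<Rightarrow> real \<Rightarrow> real \<Rightarrow> real \<Rightarrow> real" where
  "B_coef L alpha kappa rtr =
     (let Lb = Lbar L alpha kappa; t = tau L alpha kappa rtr in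
      Lb * ((1 + kappa) / t) + (1 / t^2) * (kappa / (1 + kappa)))"

definition sinr_lim1 :: "nat \<Rightarrow> nat \<Rightarrow> nat \<Rightarrow> real \<Rightarrow> real \<Rightarrow> real \<Rightarrow> real \<Rightarrow> real" where
  "sinr_lim1 N K L alpha kappa rtr rho =
     (let Lb = Lbar L alpha kappa; v = nu L alpha kappa rtr; t = tau L alpha kappa rtr in
      1 / (1 / (v * real N * rho) * ((1 + kappa) / t)
           + real K / (real N * v) * (Lb * ((1 + kappa) / t) + (1 / t^2) * (kappa / (1 + kappa)))
           + alpha / t^2 * (Lb - 1 / (1 + kappa))))"

definition sinr_lim2 :: "nat \<Rightarrow> nat \<Rightarrow> nat \<Rightarrow> real \<Rightarrow> real \<Rightarrow> real \<Rightarrow> real \<Rightarrow> real" where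
  "sinr_lim2 N K L alpha kappa rtr rho =
     (let Lb = Lbar L alpha kappa; t = tau L alpha kappa rtr in
      1 / (Lb / (real N * rho) * ((1 + kappa) / t)
           + 1 / rtr * A_coef N K L alpha kappa rtr rho
           + real K / real N * Lb * B_coef L alpha kappa rtr
           + alpha / t^2 * (Lb - 1 / (1 + kappa))))"

end

theory Submission
  imports Defs
begin


lemma sum_d1:
  assumes "j < L"
  shows "(\<Sum>n<L. d_simple kappa alpha j n k) = Lbar L alpha kappa"
proof -
  have "(\<Sum>n<L. d_simple kappa alpha j n k) = d_simple kappa alpha j j k + (\<Sum>n\<in>{..<L}-{j}. d_simple kappa alpha j n k)"
    using assms by (subst sum.remove[of _ j]) auto
  also have "(\<Sum>n\<in>{..<L}-{j}. d_simple kappa alpha j n k) = (\<Sum>n\<in>{..<L}-{j}. alpha)"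
    by (rule sum.cong) (auto simp: d_simple_def)
  also have "\<dots> = real (L - 1) * alpha" using assms by simp
  finally show ?thesis using assms by (simp add: Lbar_def d_simple_def of_nat_diff algebra_simps)
qed

lemma sum_d2:
  assumes "j < L"
  shows "(\<Sum>l<L. d_simple kappa alpha l j k) = Lbar L alpha kappa"
proof -
  have "(\<Sum>l<L. d_simple kappa alpha l j k) = (\<Sum>n<L. d_simple kappa alpha j n k)"
    by (rule sum.cong) (auto simp: d_simple_def)
  then show ?thesis using sum_d1[OF assms] by simp
qed

lemma Lbar_pos: "0 \<le> alpha \<Longrightarrow> 0 \<le> kappa \<Longrightarrow> L \<ge> 1 \<Longrightarrow> Lbar L alpha kappa > 0"
  unfolding Lbar_def by (auto intro!: add_nonneg_pos)

lemma phi_simple: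
  assumes "j < L" "0 \<le> alpha" "0 \<le> kappa" "0 < rtr"
  shows "phi (d_simple kappa alpha) L rtr j l k = d_simple kappa alpha j j k * d_simple kappa alpha j l k * nu L alpha kappa rtr"
proof -
  have Lb: "Lbar L alpha kappa > 0" using assms by (intro Lbar_pos) auto
  show ?thesis unfolding phi_def sum_d1[OF assms(1)] nu_def using Lb assms
    by (simp add: field_simps)
qed



lemma aux:
  fixes p a n k m x l y :: real assumes "p \<noteq> 0"
  shows "p * (a + (n * k + n * (m * (inverse p * x))) + inverse p * 0 + l * (inverse p * y))
     = p * a + n * (k * p) + n * (m * x) + l * y"
  using assms by (simp add: field_simps)

lemma gamma_eqs:
  fixes a :: "nat \<Rightarrow> nat \<Rightarrow> nat \<Rightarrow> complex" and N K L :: nat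
  assumes "L \<ge> 1" "0 < alpha" "0 \<le> kappa" "0 < rtr" "0 < rho" "K \<ge> 1" "N \<ge> 1"
    and orth: "\<And>j i k. j < L \<Longrightarrow> i < K \<Longrightarrow> k < K \<Longrightarrow>
        gram N (hb_simple kappa a j i) (hb_simple kappa a j k)
          = (if i = k then complex_of_real (kappa / (1 + kappa)) else 0)"
    and jk: "j < L" "k < K"
  defines "c \<equiv> 1 / (1 + kappa)"
  defines "v \<equiv> nu L alpha kappa rtr"
  defines "p \<equiv> c * c * v + kappa / (1 + kappa)"
  defines "G \<equiv> p\<^sup>2 / (p / (real N * rho) + (1 / real N) * (real K * Lbar L alpha kappa * p)
        + (1 / real N) * ((real K - 1) * (c * c * v * (kappa / (1 + kappa))))
        + (real L - 1) * (c * alpha * v)\<^sup>2)"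
  shows "gamma_MRC (d_simple kappa alpha) (hb_simple kappa a) N K L rtr rho j k = G"
    "gamma_MRT (d_simple kappa alpha) (hb_simple kappa a) N K L rtr rho j k = G"
proof -
  let ?d = "d_simple kappa alpha" and ?h = "hb_simple kappa a"
  have nrm: "nrm N ?h l i = kappa / (1 + kappa)" if "l < L" "i < K" for l i
    using orth[OF that that(2)] by (simp add: nrm_def)
  have phi: "phi ?d L rtr l m i = ?d l l i * ?d l m i * v" if "l < L" for l m i
    using phi_simple[OF that, of alpha kappa rtr] assms unfolding v_def by simp
  have phijj: "phi ?d L rtr l l i = c * c * v" if "l < L" for l i
    using phi[OF that] by (simp add: d_simple_def c_def)
  have philj: "phi ?d L rtr l m i = c * alpha * v" if "l < L" "m \<noteq> l" for l m i
    using phi[OF that(1)] that by (simp add: d_simple_def c_def)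
  have th: "theta_bar ?d ?h N K L rtr l = inverse p" if "l < L" for l
  proof -
    have "(\<Sum>i<K. phi ?d L rtr l l i + nrm N ?h l i) = (\<Sum>i<K. p)"
      by (rule sum.cong) (auto simp: phijj[OF that] nrm[OF that] p_def)
    then show ?thesis using assms(6) by (simp add: theta_bar_def)
  qed
  have gram0: "(\<Sum>i\<in>{..<K} - {k}. (cmod (gram N (?h j i) (?h j k)))\<^sup>2) = 0"
    "(\<Sum>i\<in>{..<K} - {k}. (cmod (gram N (?h j k) (?h j i)))\<^sup>2) = 0"
    using orth jk by (auto intro!: sum.neutral)
  have cardK: "real (card ({..<K} - {k})) = real K - 1" using jk assms(6) by (simp add: of_nat_diff)
  have cardL: "real (card ({..<L} - {j})) = real L - 1" using jk by (simp add: of_nat_diff)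
  have p_pos: "p > 0"
  proof -
    have "v > 0" unfolding v_def nu_def using Lbar_pos[of alpha kappa L] assms
      by (auto intro!: divide_pos_pos add_pos_nonneg)
    then show ?thesis unfolding p_def c_def using assms by (auto intro!: add_pos_nonneg)
  qed
  have dswap: "(\<Sum>l<L. \<Sum>i<K. ?d j l i * X) = real K * Lbar L alpha kappa * X" for X
    by (subst sum.swap) (simp add: sum_distrib_right[symmetric] sum_d1[OF jk(1)])
  have dswap2: "(\<Sum>l<L. \<Sum>i<K. inverse p * ?d l j k * p) = real K * Lbar L alpha kappa"
  proof -
    have "(\<Sum>l<L. \<Sum>i<K. inverse p * ?d l j k * p) = (\<Sum>l<L. real K * ?d l j k)"
      using p_pos by (intro sum.cong refl) simp
    also have "\<dots> = real K * Lbar L alpha kappa" by (simp add: sum_distrib_left[symmetric] sum_d2[OF jk(1)])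
    finally show ?thesis .
  qed
  have s1: "s_MRC ?d ?h N K L rtr j k = (1 / real N) * (real K * Lbar L alpha kappa * p)
        + (1 / real N) * ((real K - 1) * (c * c * v * (kappa / (1 + kappa))))"
  proof -
    have "(\<Sum>i\<in>{..<K} - {k}. phi ?d L rtr j j k * nrm N ?h j i) = (\<Sum>i\<in>{..<K} - {k}. c * c * v * (kappa / (1 + kappa)))"
      by (rule sum.cong) (auto simp: phijj[OF jk(1)] nrm[OF jk(1)])
    moreover have "phi ?d L rtr j j k + nrm N ?h j k = p" using phijj[OF jk(1)] nrm[OF jk] by (simp add: p_def)
    ultimately show ?thesis unfolding s_MRC_def dswap by (simp add: cardK)
  qed
  have s2: "s_MRT ?d ?h N K L rtr j k = (1 / real N) * (real K * Lbar L alpha kappa)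
        + (1 / real N) * ((real K - 1) * (inverse p * (c * c * v * (kappa / (1 + kappa)))))"
  proof -
    have "(\<Sum>i\<in>{..<K} - {k}. theta_bar ?d ?h N K L rtr j * phi ?d L rtr j j i * nrm N ?h j k) = (\<Sum>i\<in>{..<K} - {k}. inverse p * (c * c * v * (kappa / (1 + kappa))))"
      by (rule sum.cong) (auto simp: phijj[OF jk(1)] nrm[OF jk] th[OF jk(1)])
    moreover have "(\<Sum>l<L. \<Sum>i<K. theta_bar ?d ?h N K L rtr l * ?d l j k * (phi ?d L rtr l l i + nrm N ?h l i))
       = (\<Sum>l<L. \<Sum>i<K. inverse p * ?d l j k * p)"
      by (intro sum.cong refl) (auto simp: th phijj nrm p_def)
    ultimately show ?thesis unfolding s_MRT_def dswap2 by (simp add: cardK)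
  qed
  have l1: "(\<Sum>l\<in>{..<L} - {j}. (phi ?d L rtr j l k)\<^sup>2) = (real L - 1) * (c * alpha * v)\<^sup>2"
  proof -
    have "(\<Sum>l\<in>{..<L} - {j}. (phi ?d L rtr j l k)\<^sup>2) = (\<Sum>l\<in>{..<L} - {j}. (c * alpha * v)\<^sup>2)"
      by (rule sum.cong) (auto simp: phi[OF jk(1)] d_simple_def c_def)
    then show ?thesis by (simp add: cardL)
  qed
  have l2: "(\<Sum>l\<in>{..<L} - {j}. theta_bar ?d ?h N K L rtr l * (phi ?d L rtr l j k)\<^sup>2) = (real L - 1) * (inverse p * (c * alpha * v)\<^sup>2)"
  proof -
    have "(\<Sum>l\<in>{..<L} - {j}. theta_bar ?d ?h N K L rtr l * (phi ?d L rtr l j k)\<^sup>2) = (\<Sum>l\<in>{..<L} - {j}. inverse p * (c * alpha * v)\<^sup>2)"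
      by (rule sum.cong) (auto simp: th philj)
    then show ?thesis by (simp add: cardL)
  qed
  have pp: "phi ?d L rtr j j k + nrm N ?h j k = p" using phijj[OF jk(1)] nrm[OF jk] by (simp add: p_def)
  show "gamma_MRC ?d ?h N K L rtr rho j k = G"
    unfolding gamma_MRC_def s1 gram0 l1 pp th[OF jk(1)] G_def by (simp add: divide_inverse)
  have "real N > 0" "1 + kappa > 0" using assms(3,7) by auto
  have "real N > 0" "1 + kappa > 0" using assms(3,7) by auto
  show "gamma_MRT ?d ?h N K L rtr rho j k = G"
  proof -
    define D where "D = 1 / (real N * rho) + ((1 / real N) * (real K * Lbar L alpha kappa)
        + (1 / real N) * ((real K - 1) * (inverse p * (c * c * v * (kappa / (1 + kappa)))))) + inverse p * 0
        + (real L - 1) * (inverse p * (c * alpha * v)\<^sup>2)"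
    have pD: "p * D = p * (1 / (real N * rho)) + (1 / real N) * ((real K * Lbar L alpha kappa) * p)
        + (1 / real N) * ((real K - 1) * (c * c * v * (kappa / (1 + kappa))))
        + (real L - 1) * (c * alpha * v)\<^sup>2"
      unfolding D_def using p_pos by (intro aux) simp
    have "gamma_MRT ?d ?h N K L rtr rho j k = inverse p * p\<^sup>2 / D"
      unfolding gamma_MRT_def s2 gram0 l2 pp th[OF jk(1)] D_def by simp
    also have "\<dots> = p\<^sup>2 / (p * D)" using p_pos by (simp add: power2_eq_square field_simps)
    also have "\<dots> = G" unfolding pD G_def by (simp add: mult.commute mult.left_commute)
    finally show ?thesis .
  qed
qed



lemma alg:
  fixes Nr Kr Lr k al rho v t Lb c p :: real
  assumes "Nr > 0" "rho > 0" "v > 0" "k \<ge> 0"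
    and c: "c = 1 / (1 + k)" and t: "t = c + k / v" and Lb: "Lb = al * (Lr - 1) + c"
    and p: "p = c * c * v + k / (1 + k)"
  defines "E \<equiv> (1 + k) / (v * Nr * rho * t) + Kr * Lb * (1 + k) / (Nr * v * t)
      + (Kr - 1) * k * c / (Nr * v * t^2) + al * al * (Lr - 1) / t^2"
  shows "1 / (v * Nr * rho) * ((1 + k) / t) + Kr / (Nr * v) * (Lb * ((1 + k) / t) + (1 / t^2) * (k / (1 + k)))
           + al / t^2 * (Lb - 1 / (1 + k)) = E + k * c / (Nr * v * t^2)"
    and "p / (Nr * rho) + (1 / Nr) * (Kr * Lb * p)
        + (1 / Nr) * ((Kr - 1) * (c * c * v * (k / (1 + k))))
        + (Lr - 1) * (c * al * v)\<^sup>2 = p^2 * E"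
    and "p > 0" "t > 0"
proof -
  have k1: "1 + k > 0" using assms by simp
  have cpos: "c > 0" using c k1 by simp
  have tpos: "t > 0" using t cpos assms by (simp add: add_pos_nonneg)
  have kc: "k / (1 + k) = k * c" using c by simp
  have pt: "p = c * v * t" using p t kc assms(3) by (simp add: field_simps)
  have c1: "(1 + k) = 1 / c" using c k1 by simp
  show "t > 0" by (fact tpos)
  show "p > 0" using pt cpos tpos assms(3) by simp
  show "1 / (v * Nr * rho) * ((1 + k) / t) + Kr / (Nr * v) * (Lb * ((1 + k) / t) + (1 / t^2) * (k / (1 + k)))
           + al / t^2 * (Lb - 1 / (1 + k)) = E + k * c / (Nr * v * t^2)"
  proof -
    have a1: "1 / (v * Nr * rho) * ((1 + k) / t) = (1 + k) / (v * Nr * rho * t)" by simp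
    have a2: "Kr / (Nr * v) * (Lb * ((1 + k) / t) + (1 / t^2) * (k / (1 + k)))
       = Kr * Lb * (1 + k) / (Nr * v * t) + Kr * k * c / (Nr * v * t^2)"
      using kc assms(1,3) tpos by (simp add: field_simps)
    have a3: "al / t^2 * (Lb - 1 / (1 + k)) = al * al * (Lr - 1) / t^2" using Lb c by simp
    have a4: "Kr * k * c / (Nr * v * t^2) = (Kr - 1) * k * c / (Nr * v * t^2) + k * c / (Nr * v * t^2)"
      by (simp add: add_divide_distrib[symmetric] algebra_simps)
    show ?thesis unfolding a1 a2 a3 a4 E_def by simp
  qed
  show "p / (Nr * rho) + (1 / Nr) * (Kr * Lb * p)
        + (1 / Nr) * ((Kr - 1) * (c * c * v * (k / (1 + k))))
        + (Lr - 1) * (c * al * v)\<^sup>2 = p^2 * E"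
  proof -
    have b1: "p / (Nr * rho) = p^2 * ((1 + k) / (v * Nr * rho * t))"
      unfolding pt c1 using assms(1-3) tpos cpos by (simp add: field_simps power2_eq_square)
    have b2: "(1 / Nr) * (Kr * Lb * p) = p^2 * (Kr * Lb * (1 + k) / (Nr * v * t))"
      unfolding pt c1 using assms(1-3) tpos cpos by (simp add: field_simps power2_eq_square)
    have b3: "(1 / Nr) * ((Kr - 1) * (c * c * v * (k / (1 + k)))) = p^2 * ((Kr - 1) * k * c / (Nr * v * t^2))"
      unfolding pt kc using assms(1-3) tpos cpos by (simp add: field_simps power2_eq_square)
    have b4: "(Lr - 1) * (c * al * v)\<^sup>2 = p^2 * (al * al * (Lr - 1) / t^2)"
      unfolding pt using assms(1-3) tpos cpos by (simp add: field_simps power2_eq_square)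
    show ?thesis unfolding b1 b2 b3 b4 E_def by (simp add: distrib_left)
  qed
qed

lemma final_bound:
  fixes X d e C0 Nr Kr q M :: real
  assumes "X > 0" "d \<ge> 0" "X \<ge> Kr * q / Nr" "d = C0 / Nr" "Nr > 0" "Kr > 0" "q > 0"
    "Nr \<le> M * Kr" "C0 * M < e * q^2 * Kr" "C0 \<ge> 0" "e > 0"
  shows "\<bar>1 / X - 1 / (X + d)\<bar> < e"
proof -
  have xd: "X + d > 0" using assms by linarith
  have "1 / X - 1 / (X + d) = d / (X * (X + d))" using assms xd by (simp add: field_simps)
  moreover have "d / (X * (X + d)) \<ge> 0" using assms xd by simp
  ultimately have "\<bar>1 / X - 1 / (X + d)\<bar> = d / (X * (X + d))" by (simp only: abs_of_nonneg)
  also have "\<dots> \<le> d / (X * X)"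
  proof (rule divide_left_mono)
    show "X * X \<le> X * (X + d)" using assms by (intro mult_left_mono) auto
    show "0 < X * (X + d) * (X * X)" using assms xd by (intro mult_pos_pos) auto
  qed (use assms in auto)
  also have "\<dots> \<le> d / ((Kr * q / Nr) * (Kr * q / Nr))" using assms
    by (intro divide_left_mono mult_mono) auto
  also have "\<dots> = C0 * Nr / (Kr * Kr * q * q)" using assms by (simp add: field_simps)
  also have "\<dots> \<le> C0 * (M * Kr) / (Kr * Kr * q * q)" using assms
    by (intro divide_right_mono mult_left_mono) auto
  also have "\<dots> = C0 * M / (Kr * q^2)" using assms by (simp add: field_simps power2_eq_square)
  also have "\<dots> < e" using assms by (simp add: field_simps)
  finally show ?thesis .
qed

lemma lim_eq:
  assumes "0 \<le> alpha" "0 \<le> kappa" "0 < rtr" "L \<ge> 1"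
  shows "sinr_lim1 N K L alpha kappa rtr rho = sinr_lim2 N K L alpha kappa rtr rho"
proof -
  have Lb: "Lbar L alpha kappa > 0" using assms by (intro Lbar_pos) auto
  have inv: "1 / nu L alpha kappa rtr = 1 / rtr + Lbar L alpha kappa"
    using assms Lb by (simp add: nu_def field_simps)
  have e1: "1 / (nu L alpha kappa rtr * real N * rho) = (1 / rtr + Lbar L alpha kappa) * (1 / (real N * rho))"
    using inv by (metis (no_types, lifting) divide_divide_eq_left' mult.assoc times_divide_eq_left mult_1)
  have e2: "real K / (real N * nu L alpha kappa rtr) = (real K / real N) * (1 / rtr + Lbar L alpha kappa)"
    using inv by (metis divide_divide_eq_left times_divide_eq_right mult_1_right)
  show ?thesis unfolding sinr_lim1_def sinr_lim2_def A_coef_def B_coef_def Let_def e1 e2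
    by (simp add: divide_inverse algebra_simps inverse_mult_distrib power_inverse)
qed



theorem corollary5:
  fixes L :: nat and alpha kappa rtr rho :: real
    and N K :: "nat \<Rightarrow> nat"
    and a :: "nat \<Rightarrow> nat \<Rightarrow> nat \<Rightarrow> nat \<Rightarrow> complex"
  assumes L: "L \<ge> 1"
    and alpha: "0 < alpha" "alpha \<le> 1"
    and kappa: "0 \<le> kappa"
    and rtr: "0 < rtr"
    and rho: "0 < rho"
    and N_lim: "filterlim N at_top sequentially"
    and K_lim: "filterlim K at_top sequentially"
    and ratio_liminf: "1 \<le> liminf (\<lambda>n. ereal (real (N n) / real (K n)))"
    and ratio_limsup: "limsup (\<lambda>n. ereal (real (N n) / real (K n))) < \<infinity>"
    and LoS_orth: "\<And>n j i k. j < L \<Longrightarrow> i < K n \<Longrightarrow> k < K n \<Longrightarrow>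
        gram (N n) (hb_simple kappa (a n) j i) (hb_simple kappa (a n) j k)
          = (if i = k then complex_of_real (kappa / (1 + kappa)) else 0)"
  shows "(\<forall>n. sinr_lim1 (N n) (K n) L alpha kappa rtr rho
               = sinr_lim2 (N n) (K n) L alpha kappa rtr rho)
    \<and> (\<forall>e > 0. \<forall>\<^sub>F n in sequentially. \<forall>j < L. \<forall>k < K n.
          \<bar>gamma_MRC (d_simple kappa alpha) (hb_simple kappa (a n)) (N n) (K n) L rtr rho j k
             - sinr_lim1 (N n) (K n) L alpha kappa rtr rho\<bar> < e
        \<and> \<bar>gamma_MRT (d_simple kappa alpha) (hb_simple kappa (a n)) (N n) (K n) L rtr rho j k
             - sinr_lim1 (N n) (K n) L alpha kappa rtr rho\<bar> < e)"
proof (intro conjI allI impI)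
  fix n show "sinr_lim1 (N n) (K n) L alpha kappa rtr rho = sinr_lim2 (N n) (K n) L alpha kappa rtr rho"
    using lim_eq[of alpha kappa rtr L] assms by simp
next
  fix e :: real assume e: "e > 0"
  define c where "c = 1 / (1 + kappa)"
  define v where "v = nu L alpha kappa rtr"
  define t where "t = tau L alpha kappa rtr"
  define Lb where "Lb = Lbar L alpha kappa"
  define p where "p = c * c * v + kappa / (1 + kappa)"
  define q where "q = Lb * (1 + kappa) / (v * t)"
  define C0 where "C0 = kappa * c / (v * t^2)"
  have Lbpos: "Lb > 0" unfolding Lb_def using assms by (intro Lbar_pos) auto
  have vpos: "v > 0" unfolding v_def nu_def using Lbpos[unfolded Lb_def] rtr
    by (auto intro!: divide_pos_pos add_pos_nonneg)
  have t_eq: "t = c + kappa / v" unfolding t_def tau_def c_def v_def ..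
  have Lb_eq: "Lb = alpha * (real L - 1) + c" unfolding Lb_def Lbar_def c_def ..
  have tpos: "t > 0"
    using alg(4)[OF _ rho vpos kappa c_def t_eq Lb_eq p_def, of 1] by simp
  have qpos: "q > 0" unfolding q_def using Lbpos vpos tpos kappa by simp
  have C0nn: "C0 \<ge> 0" unfolding C0_def c_def using kappa vpos tpos by simp
  obtain M :: nat where M: "limsup (\<lambda>n. ereal (real (N n) / real (K n))) < ereal (real M)"
    using ratio_limsup less_PInf_Ex_of_nat by auto
  have ev1: "\<forall>\<^sub>F n in sequentially. ereal (real (N n) / real (K n)) < ereal (real M)"
    using Limsup_lessD[OF M] .
  have ev2: "\<forall>\<^sub>F n in sequentially. K n \<ge> nat (ceiling (C0 * real M / (e * q^2))) + 1"
    using K_lim by (simp add: filterlim_at_top)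
  have ev3: "\<forall>\<^sub>F n in sequentially. N n \<ge> 1"
    using N_lim by (simp add: filterlim_at_top)
  show "\<forall>\<^sub>F n in sequentially. \<forall>j < L. \<forall>k < K n.
          \<bar>gamma_MRC (d_simple kappa alpha) (hb_simple kappa (a n)) (N n) (K n) L rtr rho j k
             - sinr_lim1 (N n) (K n) L alpha kappa rtr rho\<bar> < e
        \<and> \<bar>gamma_MRT (d_simple kappa alpha) (hb_simple kappa (a n)) (N n) (K n) L rtr rho j k
             - sinr_lim1 (N n) (K n) L alpha kappa rtr rho\<bar> < e"
    using ev1 ev2 ev3
  proof eventually_elim
    case (elim n)
    have K1: "K n \<ge> 1" using elim(2) by simp
    have Kr: "real (K n) > 0" using K1 by simp
    have Nr: "real (N n) > 0" using elim(3) by simp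
    have NM: "real (N n) \<le> real M * real (K n)"
      using elim(1) Kr by (simp add: field_simps)
    have "real (K n) \<ge> C0 * real M / (e * q^2) + 1"
    proof -
      have "C0 * real M / (e * q^2) \<le> real (nat (ceiling (C0 * real M / (e * q^2))))"
        by linarith
      then show ?thesis using elim(2) by linarith
    qed
    then have "real (K n) > C0 * real M / (e * q^2)" by linarith
    then have KC: "C0 * real M < e * q^2 * real (K n)" using e qpos by (simp add: field_simps)
    define E where "E = (1 + kappa) / (v * real (N n) * rho * t) + real (K n) * Lb * (1 + kappa) / (real (N n) * v * t)
      + (real (K n) - 1) * kappa * c / (real (N n) * v * t^2) + alpha * alpha * (real L - 1) / t^2"
    note A1 = alg(1)[where Kr = "real (K n)", OF Nr rho vpos kappa c_def t_eq Lb_eq p_def, folded E_def]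
    note A2 = alg(2)[where Kr = "real (K n)", OF Nr rho vpos kappa c_def t_eq Lb_eq p_def, folded E_def]
    note A3 = alg(3)[OF Nr rho vpos kappa c_def t_eq Lb_eq p_def]
    have lim1: "sinr_lim1 (N n) (K n) L alpha kappa rtr rho = 1 / (E + C0 / real (N n))"
      unfolding sinr_lim1_def Let_def Lb_def[symmetric] v_def[symmetric] t_def[symmetric] A1 C0_def
      by (simp add: mult.commute mult.left_commute)
    have EK: "E \<ge> real (K n) * q / real (N n)"
    proof -
      have "real (K n) * q / real (N n) = real (K n) * Lb * (1 + kappa) / (real (N n) * v * t)"
        unfolding q_def by (simp add: field_simps)
      moreover have "0 \<le> (1 + kappa) / (v * real (N n) * rho * t)" using kappa vpos Nr rho tpos by simp
      moreover have "0 \<le> (real (K n) - 1) * kappa * c / (real (N n) * v * t^2)"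
        using K1 kappa vpos Nr tpos unfolding c_def by simp
      moreover have "0 \<le> alpha * alpha * (real L - 1) / t^2" using L by simp
      ultimately show ?thesis unfolding E_def by linarith
    qed
    have "real (K n) * q / real (N n) > 0" using Kr qpos Nr by simp
    then have Epos: "E > 0" using EK by linarith
    have bound: "\<bar>1 / E - 1 / (E + C0 / real (N n))\<bar> < e"
      by (rule final_bound[OF Epos _ EK refl Nr Kr qpos NM KC C0nn e]) (use C0nn Nr in simp)
    have G: "p\<^sup>2 / (p / (real (N n) * rho) + (1 / real (N n)) * (real (K n) * Lbar L alpha kappa * p)
        + (1 / real (N n)) * ((real (K n) - 1) * (c * c * v * (kappa / (1 + kappa))))
        + (real L - 1) * (c * alpha * v)\<^sup>2) = 1 / E"
      using A2 A3 unfolding Lb_def[symmetric] by simp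
    show ?case
    proof (intro allI impI conjI)
      fix j k assume jk: "j < L" "k < K n"
      note g = gamma_eqs[OF L alpha(1) kappa rtr rho K1 elim(3) LoS_orth[where n=n] jk,
          folded c_def v_def, folded p_def, unfolded G]
      show "\<bar>gamma_MRC (d_simple kappa alpha) (hb_simple kappa (a n)) (N n) (K n) L rtr rho j k
             - sinr_lim1 (N n) (K n) L alpha kappa rtr rho\<bar> < e"
        using g(1) lim1 bound by simp
      show "\<bar>gamma_MRT (d_simple kappa alpha) (hb_simple kappa (a n)) (N n) (K n) L rtr rho j k
             - sinr_lim1 (N n) (K n) L alpha kappa rtr rho\<bar> < e"
        using g(2) lim1 bound by simp
    qed
  qed
qed

end
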